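(* Let $\lambda=\sigma\Lambda+r\gamma\in W\Lambda$ ($\sigma\in S_n$, $\gamma\in Q$) and let $\alpha$ be a positive root. Then $(\lambda,\lambda^\alpha)$ is admissible if and only if one of the following holds: (i) $(\sigma\Lambda,\alpha)>0$, and for every decomposition $\alpha=\beta+\gamma'$ with $\beta,\gamma'$ positive roots, $(\sigma\Lambda,\beta)<0$ or $(\sigma\Lambda,\gamma')<0$; (ii) $(\sigma\Lambda,\alpha)<0$, and for every decomposition $\alpha=\beta+\gamma'$ with $\beta,\gamma'$ positive roots, $(\sigma\Lambda,\beta)<0$ and $(\sigma\Lambda,\gamma')<0$.
   Context: Fix integers $n\ge2$, $r\ge n+2$. $\varepsilon_1,\dots,\varepsilon_n$ orthonormal basis of $\mathbb R^n$ with inner product $(\cdot,\cdot)$; $\bar\varepsilon_i=\varepsilon_i-\frac1n\sum_j\varepsilon_j$, $P=\sum_i\mathbb Z\bar\varepsilon_i$, $\alpha_i=\varepsilon_i-\varepsilon_{i+1}$, $Q=\sum_i\mathbb Z\alpha_i$, $\theta=\alpha_1+\dots+\alpha_{n-1}$; positive roots $\varepsilon_i-\varepsilon_j$ ($i<j$). Fix $\Lambda\in P$ with $(\Lambda,\alpha_i)>0$ for all $i$ and $(\Lambda,\theta)<r$. $S_n$ permutes the $\varepsilon_i$; $\ell(\sigma)$ is the length. Every element of $W\Lambda=\{\sigma\Lambda+r\gamma:\sigma\in S_n,\gamma\in Q\}$ has a unique such expression, and $\deg(\sigma\Lambda+r\gamma)=\ell(\sigma)-2|\gamma|$ with $|\sum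 c_i\alpha_i|=\sum c_i$. For a positive root $\alpha$, $m_\alpha(\lambda)$ is the integer with $0<m_\alpha(\lambda)<r$, $m_\alpha(\lambda)\equiv(\lambda,\alpha)\bmod r$; $\lambda^\alpha=\lambda-m_\alpha(\lambda)\alpha$. The pair $(\lambda,\lambda^\alpha)$ is admissible if $\deg\lambda^\alpha=\deg\lambda+1$. *)

theory Defs
  imports Complex_Main "HOL-Combinatorics.Permutations"
begin

text \<open>Vectors of R^n are functions nat => real, coordinates indexed by 0..n-1
  (standard basis eps 0, ..., eps (n-1)); all vectors used vanish outside {..<n}.\<close>

type_synonym vec = "nat \<Rightarrow> real"

definition eps :: "nat \<Rightarrow> vec" where
  "eps i = (\<lambda>j. if j = i then 1 else 0)"

definition ip :: "nat \<Rightarrow> vec \<Rightarrow> vec \<Rightarrow> real" where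
  "ip n x y = (\<Sum>j<n. x j * y j)"

definition epsbar :: "nat \<Rightarrow> nat \<Rightarrow> vec" where
  "epsbar n i = (\<lambda>j. eps i j - (1 / real n) * (\<Sum>k<n. eps k j))"

definition alpha :: "nat \<Rightarrow> vec" where
  "alpha i = (\<lambda>j. eps i j - eps (Suc i) j)"

definition Pl :: "nat \<Rightarrow> vec set" where
  "Pl n = {x. \<exists>c::nat \<Rightarrow> int. x = (\<lambda>j. \<Sum>i<n. of_int (c i) * epsbar n i j)}"

definition Ql :: "nat \<Rightarrow> vec set" where
  "Ql n = {x. \<exists>c::nat \<Rightarrow> int. x = (\<lambda>j. \<Sum>i<n-1. of_int (c i) * alpha i j)}"

definition theta :: "nat \<Rightarrow> vec" where
  "theta n = (\<lambda>j. \<Sum>i<n-1. alpha i j)"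

definition qheight :: "nat \<Rightarrow> vec \<Rightarrow> int" where
  "qheight n g = (THE h. \<exists>c::nat \<Rightarrow> int. g = (\<lambda>j. \<Sum>i<n-1. of_int (c i) * alpha i j)
                            \<and> h = (\<Sum>i<n-1. c i))"

text \<open>S_n acts by permuting the eps_i: act s (eps i) = eps (s i).\<close>
definition act :: "(nat \<Rightarrow> nat) \<Rightarrow> vec \<Rightarrow> vec" where
  "act s x = (\<lambda>j. x (inv s j))"

definition perm_length :: "nat \<Rightarrow> (nat \<Rightarrow> nat) \<Rightarrow> nat" where
  "perm_length n s = card {(i, j). i < j \<and> j < n \<and> s j < s i}"

definition affW_orbit :: "nat \<Rightarrow> nat \<Rightarrow> vec \<Rightarrow> vec set" where
  "affW_orbit n r L = {(\<lambda>j. act s L j + real r * g j) | s g. s permutes {..<n} \<and> g \<in> Ql n}"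

definition deg :: "nat \<Rightarrow> nat \<Rightarrow> vec \<Rightarrow> vec \<Rightarrow> int" where
  "deg n r L lam = (THE d. \<exists>s g. s permutes {..<n} \<and> g \<in> Ql n \<and>
       lam = (\<lambda>j. act s L j + real r * g j) \<and> d = int (perm_length n s) - 2 * qheight n g)"

definition posroots :: "nat \<Rightarrow> vec set" where
  "posroots n = {(\<lambda>k. eps i k - eps j k) | i j. i < j \<and> j < n}"

definition mval :: "nat \<Rightarrow> nat \<Rightarrow> vec \<Rightarrow> vec \<Rightarrow> int" where
  "mval n r a lam = (THE m::int. 0 < m \<and> m < int r \<and>
       (\<exists>k::int. ip n lam a = real_of_int m + real_of_int k * real r))"

definition refl_alpha :: "nat \<Rightarrow> nat \<Rightarrow> vec \<Rightarrow> vec \<Rightarrow> vec" where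
  "refl_alpha n r a lam = (\<lambda>j. lam j - real_of_int (mval n r a lam) * a j)"

definition admissible :: "nat \<Rightarrow> nat \<Rightarrow> vec \<Rightarrow> vec \<Rightarrow> vec \<Rightarrow> bool" where
  "admissible n r L lam a \<longleftrightarrow> deg n r L (refl_alpha n r a lam) = deg n r L lam + 1"

end

theory Submission
  imports Defs
begin


definition Ncnt :: "nat \<Rightarrow> (nat \<Rightarrow> real) \<Rightarrow> int" where
  "Ncnt n x = (\<Sum>p<n. \<Sum>q<n. of_bool (p < q \<and> x p < x q))"

lemma dsum_split:
  fixes T :: "nat \<Rightarrow> nat \<Rightarrow> int"
  assumes "finite S" "E \<subseteq> S" "\<And>p q. p \<notin> E \<Longrightarrow> q \<notin> E \<Longrightarrow> T p q = 0"
  shows "(\<Sum>p\<in>S. \<Sum>q\<in>S. T p q) = (\<Sum>p\<in>E. \<Sum>q\<in>E. T p q) + (\<Sum>k\<in>S-E. (\<Sum>p\<in>E. T p k) + (\<Sum>q\<in>E. T k q))"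
proof -
  have fE: "finite E" using assms finite_subset by blast
  have sp: "\<And>f. (\<Sum>p\<in>S. f p) = (\<Sum>p\<in>E. f p) + (\<Sum>p\<in>S-E. f p)"
    using assms fE by (metis add.commute sum.subset_diff)
  have "(\<Sum>p\<in>S. \<Sum>q\<in>S. T p q) = (\<Sum>p\<in>E. \<Sum>q\<in>S. T p q) + (\<Sum>p\<in>S-E. \<Sum>q\<in>S. T p q)"
    by (rule sp)
  also have "(\<Sum>p\<in>E. \<Sum>q\<in>S. T p q) = (\<Sum>p\<in>E. \<Sum>q\<in>E. T p q) + (\<Sum>p\<in>E. \<Sum>q\<in>S-E. T p q)"
    by (subst sp) (simp add: sum.distrib)
  also have "(\<Sum>p\<in>E. \<Sum>q\<in>S-E. T p q) = (\<Sum>q\<in>S-E. \<Sum>p\<in>E. T p q)"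
    by (rule sum.swap)
  also have "(\<Sum>p\<in>S-E. \<Sum>q\<in>S. T p q) = (\<Sum>p\<in>S-E. \<Sum>q\<in>E. T p q)"
  proof (rule sum.cong[OF refl])
    fix p assume p: "p \<in> S - E"
    have "(\<Sum>q\<in>S. T p q) = (\<Sum>q\<in>E. T p q) + (\<Sum>q\<in>S-E. T p q)" by (rule sp)
    also have "(\<Sum>q\<in>S-E. T p q) = 0" using p assms(3) by (intro sum.neutral) auto
    finally show "(\<Sum>q\<in>S. T p q) = (\<Sum>q\<in>E. T p q)" by simp
  qed
  finally show ?thesis by (simp add: sum.distrib)
qed

lemma swap_count:
  fixes x :: "nat \<Rightarrow> real"
  assumes inj: "inj_on x {..<n}" and ij: "i < j" "j < n" and xij: "x j < x i"
  shows "Ncnt n (x \<circ> Transposition.transpose i j) =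
         Ncnt n x + 1 + 2 * int (card {k. i < k \<and> k < j \<and> x j < x k \<and> x k < x i})"
proof -
  define \<sigma> where "\<sigma> = Transposition.transpose i j"
  define S where "S = {..<n::nat}"
  define M where "M = {k. i < k \<and> k < j \<and> x j < x k \<and> x k < x i}"
  have sS: "\<And>p. p \<in> S \<Longrightarrow> \<sigma> p \<in> S" using ij by (auto simp: \<sigma>_def S_def transpose_def)
  have ss: "\<And>p. \<sigma> (\<sigma> p) = p" by (simp add: \<sigma>_def)
  have re: "\<And>f :: nat \<Rightarrow> int. (\<Sum>p\<in>S. f (\<sigma> p)) = (\<Sum>p\<in>S. f p)"
    by (rule sum.reindex_bij_witness[of _ \<sigma> \<sigma>]) (auto simp: ss sS)
  have "Ncnt n (x \<circ> \<sigma>) = (\<Sum>p\<in>S. \<Sum>q\<in>S. of_bool (p < q \<and> x (\<sigma> p) < x (\<sigma> q)))"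
    by (simp add: Ncnt_def S_def)
  also have "\<dots> = (\<Sum>p\<in>S. \<Sum>q\<in>S. of_bool (\<sigma> p < \<sigma> q \<and> x p < x q))"
    using re[of "\<lambda>p. \<Sum>q\<in>S. of_bool (p < q \<and> x (\<sigma> p) < x (\<sigma> q))"]
      re[of "\<lambda>q. of_bool (_ < q \<and> _ < x (\<sigma> q))"]
    by (simp add: ss)
  finally have e1: "Ncnt n (x \<circ> \<sigma>) = \<dots>" .
  define T where "T p q = (of_bool (\<sigma> p < \<sigma> q \<and> x p < x q) - of_bool (p < q \<and> x p < x q) :: int)" for p q
  have e2: "Ncnt n (x \<circ> \<sigma>) - Ncnt n x = (\<Sum>p\<in>S. \<Sum>q\<in>S. T p q)"
    unfolding e1 T_def by (simp add: Ncnt_def S_def sum_subtractf)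
  have E: "{i, j} \<subseteq> S" using ij by (auto simp: S_def)
  have Tz: "\<And>p q. p \<notin> {i,j} \<Longrightarrow> q \<notin> {i,j} \<Longrightarrow> T p q = 0" by (simp add: T_def \<sigma>_def)
  have e3: "(\<Sum>p\<in>S. \<Sum>q\<in>S. T p q) = (\<Sum>p\<in>{i,j}. \<Sum>q\<in>{i,j}. T p q) +
      (\<Sum>k\<in>S-{i,j}. (\<Sum>p\<in>{i,j}. T p k) + (\<Sum>q\<in>{i,j}. T k q))"
    by (rule dsum_split[OF _ E Tz]) (simp add: S_def)
  have e4: "(\<Sum>p\<in>{i,j}. \<Sum>q\<in>{i,j}. T p q) = 1"
    using ij xij by (simp add: T_def \<sigma>_def)
  have e5: "(\<Sum>k\<in>S-{i,j}. (\<Sum>p\<in>{i,j}. T p k) + (\<Sum>q\<in>{i,j}. T k q)) = (\<Sum>k\<in>S-{i,j}. 2 * of_bool (k \<in> M))"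
  proof (rule sum.cong[OF refl])
    fix k assume k: "k \<in> S - {i,j}"
    have xk: "x k \<noteq> x i" "x k \<noteq> x j" using k ij inj unfolding inj_on_def S_def by auto
    show "(\<Sum>p\<in>{i,j}. T p k) + (\<Sum>q\<in>{i,j}. T k q) = 2 * of_bool (k \<in> M)"
      using k ij xij xk by (auto simp: T_def \<sigma>_def M_def)
  qed
  have MS: "({..<n} - {i,j}) \<inter> M = M" using ij by (auto simp: M_def)
  have e6: "(\<Sum>k\<in>S-{i,j}. 2 * of_bool (k \<in> M) :: int) = 2 * int (card M)"
    by (simp add: sum_distrib_left[symmetric] S_def MS)
  show ?thesis using e2 e3 e4 e5 e6 unfolding \<sigma>_def M_def by simp
qed



lemma inv_count:
  fixes L :: vec
  assumes s: "s permutes {..<n}" and dec: "\<And>p q. p < q \<Longrightarrow> q < n \<Longrightarrow> L q < L p"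
  shows "int (perm_length n s) = Ncnt n (\<lambda>p. L (inv s p))"
proof -
  define S where "S = {..<n::nat}"
  define t where "t = inv s"
  have tS: "\<And>p. p \<in> S \<Longrightarrow> t p \<in> S" using s unfolding t_def S_def
    by (meson permutes_in_image permutes_inv)
  have sS: "\<And>p. p \<in> S \<Longrightarrow> s p \<in> S" using s unfolding S_def by (meson permutes_in_image)
  have st: "\<And>p. s (t p) = p" "\<And>p. t (s p) = p" using s unfolding t_def
    by (auto simp: permutes_inverses)
  have re: "\<And>f :: nat \<Rightarrow> int. (\<Sum>p\<in>S. f (t p)) = (\<Sum>p\<in>S. f p)"
    by (rule sum.reindex_bij_witness[of _ s t]) (auto simp: st sS tS)
  have set: "{(i, j). i < j \<and> j < n \<and> s j < s i} = (S \<times> S) \<inter> {pq. (\<lambda>(p,q). p < q \<and> s q < s p) pq}"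
    by (auto simp: S_def)
  have "int (perm_length n s) = (\<Sum>pq\<in>S \<times> S. of_bool ((\<lambda>(p,q). p < q \<and> s q < s p) pq))"
    unfolding perm_length_def set by (subst sum_of_bool_eq) (auto simp: S_def)
  also have "\<dots> = (\<Sum>p\<in>S. \<Sum>q\<in>S. of_bool (p < q \<and> s q < s p))"
    by (simp add: sum.cartesian_product case_prod_unfold del: sum_of_bool_eq)
  also have "\<dots> = (\<Sum>p\<in>S. \<Sum>q\<in>S. of_bool (t p < t q \<and> q < p))"
    using re[of "\<lambda>p. \<Sum>q\<in>S. of_bool (p < q \<and> s q < s p)"] re[of "\<lambda>q. of_bool (_ < q \<and> s q < _)"]
    by (simp add: st)
  also have "\<dots> = (\<Sum>q\<in>S. \<Sum>p\<in>S. of_bool (t p < t q \<and> q < p))" by (rule sum.swap)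
  also have "\<dots> = (\<Sum>q\<in>S. \<Sum>p\<in>S. of_bool (q < p \<and> L (t q) < L (t p)))"
  proof (intro sum.cong refl)
    fix p q assume pq: "p \<in> S" "q \<in> S"
    have "t p < t q \<longleftrightarrow> L (t q) < L (t p)"
      using dec[of "t p" "t q"] dec[of "t q" "t p"] tS[OF pq(1)] tS[OF pq(2)]
      by (cases "t p < t q"; cases "t q < t p"; auto simp: S_def)
    then show "of_bool (t p < t q \<and> q < p) = (of_bool (q < p \<and> L (t q) < L (t p)) :: int)" by auto
  qed
  finally show ?thesis by (simp add: Ncnt_def S_def t_def)
qed

lemma ip_root:
  assumes "i < n" "j < n" "i \<noteq> j"
  shows "ip n x (\<lambda>k. eps i k - eps j k) = x i - x j"
proof -
  have a: "\<And>i. i < n \<Longrightarrow> (\<Sum>k<n. x k * eps i k) = x i"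
    by (simp add: eps_def if_distrib cong: if_cong)
  show ?thesis using assms a[of i] a[of j]
    by (simp add: ip_def right_diff_distrib sum_subtractf)
qed

lemma L_coord:
  assumes "L \<in> Pl n" obtains c :: "nat \<Rightarrow> int" where "\<And>p. p < n \<Longrightarrow> L p = of_int (c p) - (1 / real n) * (\<Sum>i<n. of_int (c i))"
proof -
  obtain c :: "nat \<Rightarrow> int" where L: "L = (\<lambda>j. \<Sum>i<n. of_int (c i) * epsbar n i j)"
    using assms unfolding Pl_def by blast
  have "L p = of_int (c p) - (1 / real n) * (\<Sum>i<n. of_int (c i))" if p: "p < n" for p
  proof -
    have s1: "(\<Sum>k<n. eps k p) = 1" using p by (simp add: eps_def)
    have s2: "(\<Sum>i<n. of_int (c i) * eps i p) = (of_int (c p) :: real)" using p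
      by (simp add: eps_def if_distrib cong: if_cong)
    have "L p = (\<Sum>i<n. of_int (c i) * eps i p - (1 / real n) * of_int (c i))"
      unfolding L epsbar_def s1 by (simp add: algebra_simps)
    also have "\<dots> = of_int (c p) - (1 / real n) * (\<Sum>i<n. of_int (c i))"
      by (simp add: sum_subtractf s2 sum_distrib_left)
    finally show ?thesis .
  qed
  then show ?thesis using that by blast
qed

lemma L_int:
  assumes "L \<in> Pl n" "p < n" "q < n" shows "L p - L q \<in> \<int>"
proof -
  obtain c :: "nat \<Rightarrow> int" where "\<And>p. p < n \<Longrightarrow> L p = of_int (c p) - (1 / real n) * (\<Sum>i<n. of_int (c i))"
    using L_coord[OF assms(1)] by blast
  then have "L p - L q = of_int (c p - c q)" using assms by simp
  then show ?thesis by simp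
qed

lemma Ql_int:
  assumes "g \<in> Ql n" shows "g j \<in> \<int>"
proof -
  obtain c :: "nat \<Rightarrow> int" where g: "g = (\<lambda>j. \<Sum>i<n-1. of_int (c i) * alpha i j)"
    using assms unfolding Ql_def by blast
  show ?thesis unfolding g alpha_def eps_def
    by (intro Ints_sum Ints_mult Ints_diff) auto
qed

lemma alpha_ip:
  assumes "Suc i < n" shows "ip n x (alpha i) = x i - x (Suc i)"
  using ip_root[of i n "Suc i" x] assms unfolding alpha_def by simp

lemma theta_ip:
  assumes "n \<ge> 1" shows "ip n x (theta n) = x 0 - x (n - 1)"
proof -
  have "ip n x (theta n) = (\<Sum>i<n-1. ip n x (alpha i))"
    unfolding ip_def theta_def by (simp add: sum_distrib_left sum.swap[of _ "{..<n}"])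
  also have "\<dots> = (\<Sum>i<n-1. x i - x (Suc i))"
    using assms by (intro sum.cong refl alpha_ip) auto
  also have "\<dots> = x 0 - x (n - 1)" by (rule sum_lessThan_telescope')
  finally show ?thesis .
qed



lemma L_dec:
  assumes pos: "\<forall>i < n - 1. ip n L (alpha i) > 0" and pq: "p < q" "q < n"
  shows "L q < L p"
proof -
  have "\<forall>q. q = p + Suc d \<longrightarrow> q < n \<longrightarrow> L q < L p" for d
  proof (induction d)
    case 0 show ?case
    proof (intro allI impI)
      fix q assume q: "q = p + Suc 0" "q < n"
      then have "p < n - 1" by simp
      then have "ip n L (alpha p) > 0" using pos by blast
      then show "L q < L p" using alpha_ip[of p n L] q by simp
    qed
  next
    case (Suc d)
    show ?case
    proof (intro allI impI)
      fix q assume q: "q = p + Suc (Suc d)" "q < n"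
      have "p + Suc d < n - 1" using q by simp
      then have "ip n L (alpha (p + Suc d)) > 0" using pos by blast
      then have "L (Suc (p + Suc d)) < L (p + Suc d)" using alpha_ip[of "p + Suc d" n L] q by simp
      then show "L q < L p" using Suc q by simp
    qed
  qed
  moreover obtain d where "q = p + Suc d" using pq(1) less_iff_Suc_add by auto
  ultimately show ?thesis using pq(2) by blast
qed

lemma L_dec_le:
  assumes pos: "\<forall>i < n - 1. ip n L (alpha i) > 0" and pq: "p \<le> q" "q < n"
  shows "L q \<le> L p"
  using L_dec[OF pos, of p q] pq by (cases "p = q") auto

lemma L_bound:
  assumes n: "n \<ge> 2" and pos: "\<forall>i < n - 1. ip n L (alpha i) > 0"
    and th: "ip n L (theta n) < real r" and pq: "p < n" "q < n"
  shows "\<bar>L p - L q\<bar> < real r"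
proof -
  have "L 0 - L (n - 1) < r" using th theta_ip[of n L] n by simp
  moreover have "L p \<le> L 0" "L q \<le> L 0" "L (n-1) \<le> L p" "L (n-1) \<le> L q"
    using L_dec_le[OF pos] pq by auto
  ultimately show ?thesis by linarith
qed

lemma unique_rep:
  assumes n: "n \<ge> 2" and pos: "\<forall>i < n - 1. ip n L (alpha i) > 0"
    and th: "ip n L (theta n) < real r" and hL: "L \<in> Pl n" and r: "r > 0"
    and s: "s permutes {..<n}" and s': "s' permutes {..<n}"
    and g: "g \<in> Ql n" and g': "g' \<in> Ql n"
    and eq: "(\<lambda>j. act s L j + real r * g j) = (\<lambda>j. act s' L j + real r * g' j)"
  shows "s = s' \<and> g = g'"
proof -
  have iss: "inv s p = inv s' p" for p
  proof (cases "p < n")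
    case True
    have a: "inv s p < n" "inv s' p < n" using True s s'
      by (meson lessThan_iff permutes_in_image permutes_inv)+
    have e: "L (inv s p) - L (inv s' p) = real r * (g' p - g p)"
      using fun_cong[OF eq, of p] by (simp add: act_def algebra_simps)
    have z: "g' p - g p \<in> \<int>" using Ql_int[OF g] Ql_int[OF g'] by simp
    have "\<bar>real r * (g' p - g p)\<bar> < real r" using L_bound[OF n pos th a] e by simp
    then have "\<bar>g' p - g p\<bar> < 1" using r by (simp add: abs_mult)
    then have "g' p - g p = 0" using Ints_nonzero_abs_ge1[OF z] by fastforce
    then have "L (inv s p) = L (inv s' p)" using e by simp
    then show ?thesis using L_dec[OF pos, of "inv s p" "inv s' p"] L_dec[OF pos, of "inv s' p" "inv s p"] a
      by (cases "inv s p < inv s' p"; cases "inv s' p < inv s p"; auto)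
  next
    case False
    then show ?thesis using s s' by (metis lessThan_iff permutes_inv permutes_not_in)
  qed
  then have "inv s = inv s'" by auto
  then have ss: "s = s'" using s s' by (metis permutes_inv_inv)
  have "g = g'"
  proof
    fix j show "g j = g' j" using fun_cong[OF eq, of j] ss r by simp
  qed
  with ss show ?thesis by simp
qed

lemma deg_eq:
  assumes n: "n \<ge> 2" and pos: "\<forall>i < n - 1. ip n L (alpha i) > 0"
    and th: "ip n L (theta n) < real r" and hL: "L \<in> Pl n" and r: "r > 0"
    and s: "s permutes {..<n}" and g: "g \<in> Ql n"
  shows "deg n r L (\<lambda>j. act s L j + real r * g j) = int (perm_length n s) - 2 * qheight n g"
  unfolding deg_def
proof (rule the_equality)
  show "\<exists>s' g'. s' permutes {..<n} \<and> g' \<in> Ql n \<and>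
    (\<lambda>j. act s L j + real r * g j) = (\<lambda>j. act s' L j + real r * g' j) \<and>
    int (perm_length n s) - 2 * qheight n g = int (perm_length n s') - 2 * qheight n g'"
    using s g by (intro exI[of _ s] exI[of _ g]) simp
next
  fix d assume "\<exists>s' g'. s' permutes {..<n} \<and> g' \<in> Ql n \<and>
    (\<lambda>j. act s L j + real r * g j) = (\<lambda>j. act s' L j + real r * g' j) \<and>
    d = int (perm_length n s') - 2 * qheight n g'"
  then obtain s' g' where h: "s' permutes {..<n}" "g' \<in> Ql n"
    "(\<lambda>j. act s L j + real r * g j) = (\<lambda>j. act s' L j + real r * g' j)"
    "d = int (perm_length n s') - 2 * qheight n g'" by blast
  then have "s = s' \<and> g = g'" using unique_rep[OF n pos th hL r s h(1) g h(2) h(3)] by blast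
  then show "d = int (perm_length n s) - 2 * qheight n g" using h by simp
qed

lemma alpha_comb_coord:
  fixes f :: "nat \<Rightarrow> real"
  assumes "j < m"
  shows "(\<Sum>i<m. f i * alpha i j) = f j - (if j = 0 then 0 else f (j - 1))"
proof -
  have a: "(\<Sum>i<m. f i * eps i j) = f j" using assms
    by (simp add: eps_def if_distrib cong: if_cong)
  have b: "(\<Sum>i<m. f i * eps (Suc i) j) = (if j = 0 then 0 else f (j - 1))"
  proof (cases j)
    case 0 then show ?thesis by (simp add: eps_def)
  next
    case (Suc k)
    have "(\<Sum>i<m. f i * eps (Suc i) j) = (\<Sum>i<m. if i = k then f i else 0)"
      by (intro sum.cong refl) (auto simp: eps_def Suc)
    also have "\<dots> = f k" using assms Suc by simp
    finally show ?thesis using Suc by simp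
  qed
  show ?thesis unfolding alpha_def using a b by (simp add: right_diff_distrib sum_subtractf)
qed

lemma alpha_indep:
  fixes f :: "nat \<Rightarrow> real"
  assumes "\<And>j. (\<Sum>i<m. f i * alpha i j) = 0"
  shows "\<And>j. j < m \<Longrightarrow> f j = 0"
proof -
  fix j assume "j < m"
  then show "f j = 0"
  proof (induction j)
    case 0 then show ?case using assms[of 0] alpha_comb_coord[of 0 m f] by simp
  next
    case (Suc k) then show ?case using assms[of "Suc k"] alpha_comb_coord[of "Suc k" m f] by simp
  qed
qed

lemma qheight_eq:
  "qheight n (\<lambda>j. \<Sum>i<n-1. of_int (c i) * alpha i j) = (\<Sum>i<n-1. c i)"
  unfolding qheight_def
proof (rule the_equality)
  show "\<exists>c'. (\<lambda>j. \<Sum>i<n-1. real_of_int (c i) * alpha i j) = (\<lambda>j. \<Sum>i<n-1. real_of_int (c' i) * alpha i j) \<and>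
      sum c {..<n-1} = sum c' {..<n-1}" by (intro exI[of _ c]) simp
next
  fix h assume "\<exists>c'. (\<lambda>j. \<Sum>i<n-1. real_of_int (c i) * alpha i j) = (\<lambda>j. \<Sum>i<n-1. real_of_int (c' i) * alpha i j) \<and>
      h = sum c' {..<n-1}"
  then obtain c' where e: "(\<lambda>j. \<Sum>i<n-1. real_of_int (c i) * alpha i j) = (\<lambda>j. \<Sum>i<n-1. real_of_int (c' i) * alpha i j)"
    and h: "h = sum c' {..<n-1}" by blast
  have "(\<Sum>i<n-1. (real_of_int (c i) - real_of_int (c' i)) * alpha i j) = 0" for j
    using fun_cong[OF e, of j] by (simp add: left_diff_distrib sum_subtractf)
  then have "\<And>j. j < n - 1 \<Longrightarrow> real_of_int (c j) - real_of_int (c' j) = 0"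
    by (rule alpha_indep)
  then have "\<And>j. j < n - 1 \<Longrightarrow> c j = c' j" by simp
  then show "h = sum c {..<n-1}" using h by simp
qed

lemma root_as_alpha:
  assumes "i < j" "j < n"
  shows "(\<lambda>t. eps i t - eps j t) = (\<lambda>t. \<Sum>k<n-1. of_int (of_bool (i \<le> k \<and> k < j)) * alpha k t)"
proof
  fix t
  have "(\<Sum>k<n-1. of_int (of_bool (i \<le> k \<and> k < j)) * alpha k t) = (\<Sum>k<n-1. if i \<le> k \<and> k < j then alpha k t else 0)"
    by (intro sum.cong refl) auto
  also have "\<dots> = (\<Sum>k\<in>{k\<in>{..<n-1}. i \<le> k \<and> k < j}. alpha k t)"
    by (rule sum.inter_filter[symmetric]) simp
  also have "{k\<in>{..<n-1}. i \<le> k \<and> k < j} = {i..<j}" using assms by auto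
  also have "(\<Sum>k\<in>{i..<j}. alpha k t) = (\<Sum>k\<in>{i..<j}. eps k t - eps (Suc k) t)"
    by (simp add: alpha_def)
  also have "\<dots> = eps i t - eps j t"
    using sum_Suc_diff'[of i j "\<lambda>k. - eps k t"] assms by simp
  finally show "eps i t - eps j t = (\<Sum>k<n-1. of_int (of_bool (i \<le> k \<and> k < j)) * alpha k t)" by simp
qed

lemma mval_eq:
  assumes "0 < m" "m < int r" "ip n lam a = of_int m + of_int k * real r"
  shows "mval n r a lam = m"
  unfolding mval_def
proof (rule the_equality)
  show "0 < m \<and> m < int r \<and> (\<exists>k::int. ip n lam a = real_of_int m + real_of_int k * real r)"
    using assms by auto
next
  fix m' assume "0 < m' \<and> m' < int r \<and> (\<exists>k::int. ip n lam a = real_of_int m' + real_of_int k * real r)"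
  then obtain k' where h: "0 < m'" "m' < int r" "ip n lam a = real_of_int m' + real_of_int k' * real r" by blast
  have "real_of_int (m - m') = real_of_int ((k' - k) * int r)" using h(3) assms(3) by (simp add: algebra_simps)
  then have e: "m - m' = (k' - k) * int r" by linarith
  show "m' = m"
  proof (rule ccontr)
    assume "m' \<noteq> m"
    then have "k' - k \<noteq> 0" using e by auto
    then have "\<bar>k' - k\<bar> \<ge> 1" by arith
    then have "\<bar>(k' - k) * int r\<bar> \<ge> int r" by (simp add: abs_mult mult_le_cancel_right1)
    then show False using e h assms by linarith
  qed
qed

lemma decomp_aux:
  assumes ev: "\<And>t. eps i t - eps j t = eps p t - eps q t + (eps p' t - eps q' t)" and o: "i < j" "p < q" "p' < q'"
  shows "(p = i \<and> q = p' \<and> q' = j) \<or> (p' = i \<and> q' = p \<and> q = j)"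
proof (cases "p = i")
  case True
  have "p' \<noteq> i \<and> q' \<noteq> i" using ev[of i] o True by (auto simp: eps_def split: if_split_asm)
  have qj: "q \<noteq> j"
  proof
    assume qj: "q = j"
    have "q \<noteq> p' \<and> q \<noteq> q'" using ev[of q] o True qj by (auto simp: eps_def split: if_split_asm)
    then show False using ev[of p'] o True qj \<open>p' \<noteq> i \<and> q' \<noteq> i\<close> by (auto simp: eps_def split: if_split_asm)
  qed
  have "q = p'" using ev[of q] o True qj by (auto simp: eps_def split: if_split_asm)
  moreover have "q' = j" using ev[of q'] o True \<open>q = p'\<close> \<open>p' \<noteq> i \<and> q' \<noteq> i\<close> by (auto simp: eps_def split: if_split_asm)
  ultimately show ?thesis using True by simp
next
  case False
  have pq': "p = q' \<and> p \<noteq> j \<and> p \<noteq> p'" using ev[of p] o False by (auto simp: eps_def split: if_split_asm)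
  have "p' = i" using ev[of p'] o pq' by (auto simp: eps_def split: if_split_asm)
  moreover have "q = j" using ev[of q] o pq' \<open>p' = i\<close> by (auto simp: eps_def split: if_split_asm)
  ultimately show ?thesis using pq' by simp
qed
lemma posroots_I: "p < q \<Longrightarrow> q < n \<Longrightarrow> (\<lambda>t. eps p t - eps q t) \<in> posroots n"
  unfolding posroots_def by blast

lemma decomp:
  assumes "i < j" "j < n"
  shows "(\<forall>b\<in>posroots n. \<forall>c\<in>posroots n. (\<lambda>t. eps i t - eps j t) = (\<lambda>t. b t + c t) \<longrightarrow> P b c)
     \<longleftrightarrow> (\<forall>k. i < k \<and> k < j \<longrightarrow> P (\<lambda>t. eps i t - eps k t) (\<lambda>t. eps k t - eps j t)
                 \<and> P (\<lambda>t. eps k t - eps j t) (\<lambda>t. eps i t - eps k t))"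
proof
  assume H: "\<forall>b\<in>posroots n. \<forall>c\<in>posroots n. (\<lambda>t. eps i t - eps j t) = (\<lambda>t. b t + c t) \<longrightarrow> P b c"
  show "\<forall>k. i < k \<and> k < j \<longrightarrow> P (\<lambda>t. eps i t - eps k t) (\<lambda>t. eps k t - eps j t)
                 \<and> P (\<lambda>t. eps k t - eps j t) (\<lambda>t. eps i t - eps k t)"
  proof (intro allI impI)
    fix k assume k: "i < k \<and> k < j"
    have m: "(\<lambda>t. eps i t - eps k t) \<in> posroots n" "(\<lambda>t. eps k t - eps j t) \<in> posroots n"
      using k assms by (auto intro!: posroots_I)
    have e1: "(\<lambda>t. eps i t - eps j t) = (\<lambda>t. (eps i t - eps k t) + (eps k t - eps j t))" by simp
    have e2: "(\<lambda>t. eps i t - eps j t) = (\<lambda>t. (eps k t - eps j t) + (eps i t - eps k t))" by simp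
    show "P (\<lambda>t. eps i t - eps k t) (\<lambda>t. eps k t - eps j t) \<and> P (\<lambda>t. eps k t - eps j t) (\<lambda>t. eps i t - eps k t)"
      using H[rule_format, OF m(1) m(2) e1] H[rule_format, OF m(2) m(1) e2] by blast
  qed
next
  assume H: "\<forall>k. i < k \<and> k < j \<longrightarrow> P (\<lambda>t. eps i t - eps k t) (\<lambda>t. eps k t - eps j t)
                 \<and> P (\<lambda>t. eps k t - eps j t) (\<lambda>t. eps i t - eps k t)"
  show "\<forall>b\<in>posroots n. \<forall>c\<in>posroots n. (\<lambda>t. eps i t - eps j t) = (\<lambda>t. b t + c t) \<longrightarrow> P b c"
  proof (intro ballI impI)
    fix b c assume b: "b \<in> posroots n" and c: "c \<in> posroots n" and e: "(\<lambda>t. eps i t - eps j t) = (\<lambda>t. b t + c t)"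
    obtain p q where bpq: "b = (\<lambda>k. eps p k - eps q k)" "p < q" "q < n" using b unfolding posroots_def by blast
    obtain p' q' where cpq: "c = (\<lambda>k. eps p' k - eps q' k)" "p' < q'" "q' < n" using c unfolding posroots_def by blast
    have ev: "\<And>t. eps i t - eps j t = eps p t - eps q t + (eps p' t - eps q' t)"
      using e bpq cpq by (metis)
    have "(p = i \<and> q = p' \<and> q' = j) \<or> (p' = i \<and> q' = p \<and> q = j)"
      by (rule decomp_aux[OF ev assms(1) bpq(2) cpq(2)])
    then show "P b c" using H bpq cpq by auto
  qed
qed



theorem lemmaA3:
  fixes n r :: nat and L :: vec and s :: "nat \<Rightarrow> nat" and g a :: vec
  assumes "n \<ge> 2" and "r \<ge> n + 2"
    and "L \<in> Pl n"
    and "\<forall>i < n - 1. ip n L (alpha i) > 0"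
    and "ip n L (theta n) < real r"
    and "s permutes {..<n}" and "g \<in> Ql n"
    and "a \<in> posroots n"
  shows "admissible n r L (\<lambda>j. act s L j + real r * g j) a \<longleftrightarrow>
    ((ip n (act s L) a > 0 \<and>
      (\<forall>b\<in>posroots n. \<forall>c\<in>posroots n. a = (\<lambda>j. b j + c j) \<longrightarrow>
         ip n (act s L) b < 0 \<or> ip n (act s L) c < 0))
   \<or> (ip n (act s L) a < 0 \<and>
      (\<forall>b\<in>posroots n. \<forall>c\<in>posroots n. a = (\<lambda>j. b j + c j) \<longrightarrow>
         ip n (act s L) b < 0 \<and> ip n (act s L) c < 0)))"
proof -
  note n = assms(1) and hL = assms(3) and pos = assms(4) and th = assms(5) and s = assms(6) and g = assms(7)
  have r0: "r > 0" using assms(2) by simp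
  obtain i j where a: "a = (\<lambda>k. eps i k - eps j k)" and ij: "i < j" "j < n"
    using assms(8) unfolding posroots_def by blast
  define x where "x = (\<lambda>p. L (inv s p))"
  have actx: "act s L = x" by (simp add: act_def x_def fun_eq_iff)
  have invS: "\<And>p. p < n \<Longrightarrow> inv s p < n" using s by (meson lessThan_iff permutes_in_image permutes_inv)
  have dec: "\<And>p q. p < q \<Longrightarrow> q < n \<Longrightarrow> L q < L p" using L_dec[OF pos] by blast
  have Linj: "\<And>p q. p < n \<Longrightarrow> q < n \<Longrightarrow> L p = L q \<Longrightarrow> p = q"
    using dec by (metis less_irrefl linorder_neqE_nat)
  have invinj: "inj (inv s)" using s by (meson bij_is_inj permutes_bij permutes_inv)
  have xinj: "inj_on x {..<n}"
  proof (rule inj_onI)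
    fix p q assume "p \<in> {..<n}" "q \<in> {..<n}" "x p = x q"
    then have "inv s p = inv s q" using Linj invS unfolding x_def by auto
    then show "p = q" using invinj by (simp add: inj_eq)
  qed
  have xint: "\<And>p q. p < n \<Longrightarrow> q < n \<Longrightarrow> x p - x q \<in> \<int>"
    unfolding x_def using L_int[OF hL] invS by blast
  have xb: "\<And>p q. p < n \<Longrightarrow> q < n \<Longrightarrow> \<bar>x p - x q\<bar> < real r"
    unfolding x_def using L_bound[OF n pos th] invS by blast
  have xne: "\<And>p q. p < n \<Longrightarrow> q < n \<Longrightarrow> p \<noteq> q \<Longrightarrow> x p \<noteq> x q"
    using xinj unfolding inj_on_def by blast
  define lam where "lam = (\<lambda>j. act s L j + real r * g j)"
  have ipa: "ip n (act s L) a = x i - x j" unfolding a actx using ip_root[of i n j x] ij by simp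
  have iplam: "ip n lam a = (x i - x j) + real r * (g i - g j)"
    unfolding a lam_def actx using ip_root[of i n j "\<lambda>j. x j + real r * g j"] ij by (simp add: algebra_simps)
  define \<sigma> where "\<sigma> = Transposition.transpose i j"
  have sig: "\<sigma> permutes {..<n}" unfolding \<sigma>_def using ij by (intro permutes_swap_id) auto
  have ss: "(\<sigma> \<circ> s) permutes {..<n}" by (rule permutes_compose[OF s sig])
  have invss: "inv (\<sigma> \<circ> s) = inv s \<circ> \<sigma>"
    using o_inv_distrib[of \<sigma> s] permutes_bij[OF s] unfolding \<sigma>_def by simp
  have xs: "(\<lambda>p. L (inv (\<sigma> \<circ> s) p)) = x \<circ> \<sigma>" by (simp add: invss x_def fun_eq_iff)
  have acts: "act (\<sigma> \<circ> s) L = x \<circ> \<sigma>" using xs by (simp add: act_def)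
  have pl_s: "int (perm_length n s) = Ncnt n x" unfolding x_def by (rule inv_count[OF s dec])
  have pl_ss: "int (perm_length n (\<sigma> \<circ> s)) = Ncnt n (x \<circ> \<sigma>)" using inv_count[OF ss dec] xs by simp
  have deg_lam: "deg n r L lam = int (perm_length n s) - 2 * qheight n g"
    unfolding lam_def by (rule deg_eq[OF n pos th hL r0 s g])
  obtain gij :: int where gij: "g i - g j = of_int gij"
    using Ql_int[OF g, of i] Ql_int[OF g, of j] by (metis Ints_cases Ints_diff)
  obtain xij :: int where xij: "x i - x j = of_int xij"
    using xint[of i j] ij by (metis Ints_cases less_trans)
  have ipk: "\<And>k. i < k \<Longrightarrow> k < j \<Longrightarrow> ip n x (\<lambda>t. eps i t - eps k t) = x i - x k \<and> ip n x (\<lambda>t. eps k t - eps j t) = x k - x j"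
    using ij ip_root by simp
  have D1: "(\<forall>b\<in>posroots n. \<forall>c\<in>posroots n. a = (\<lambda>j. b j + c j) \<longrightarrow>
         ip n (act s L) b < 0 \<or> ip n (act s L) c < 0) \<longleftrightarrow> (\<forall>k. i < k \<and> k < j \<longrightarrow> x i - x k < 0 \<or> x k - x j < 0)"
    unfolding a actx decomp[OF ij] using ipk by auto
  have D2: "(\<forall>b\<in>posroots n. \<forall>c\<in>posroots n. a = (\<lambda>j. b j + c j) \<longrightarrow>
         ip n (act s L) b < 0 \<and> ip n (act s L) c < 0) \<longleftrightarrow> (\<forall>k. i < k \<and> k < j \<longrightarrow> x i - x k < 0 \<and> x k - x j < 0)"
    unfolding a actx decomp[OF ij] using ipk by auto
  have adm: "admissible n r L lam a \<longleftrightarrow> deg n r L (refl_alpha n r a lam) = deg n r L lam + 1"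
    by (simp add: admissible_def)
  show ?thesis
  proof (cases "x j < x i")
    case True
    have m: "mval n r a lam = xij"
      using mval_eq[of xij r n lam a gij] xij gij iplam True xb[of i j] ij by (simp add: algebra_simps)
    have rf: "refl_alpha n r a lam = (\<lambda>t. act (\<sigma> \<circ> s) L t + real r * g t)"
    proof -
      have "refl_alpha n r a lam = (\<lambda>t. lam t - of_int xij * a t)" using m by (simp add: refl_alpha_def)
      also have "\<dots> = (\<lambda>t. act (\<sigma> \<circ> s) L t + real r * g t)"
        unfolding acts lam_def actx a unfolding \<sigma>_def
        using xij ij by (auto simp: fun_eq_iff eps_def transpose_def)
      finally show ?thesis .
    qed
    have dr: "deg n r L (refl_alpha n r a lam) = int (perm_length n (\<sigma> \<circ> s)) - 2 * qheight n g"
      unfolding rf by (rule deg_eq[OF n pos th hL r0 ss g])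
    define M where "M = {k. i < k \<and> k < j \<and> x j < x k \<and> x k < x i}"
    have sc: "Ncnt n (x \<circ> \<sigma>) = Ncnt n x + 1 + 2 * int (card M)"
      unfolding \<sigma>_def M_def by (rule swap_count[OF xinj ij True])
    have fM: "finite M" unfolding M_def by (rule finite_subset[of _ "{..<j}"]) auto
    have "admissible n r L lam a \<longleftrightarrow> int (perm_length n (\<sigma> \<circ> s)) - 2 * qheight n g = int (perm_length n s) - 2 * qheight n g + 1"
      using adm dr deg_lam by simp
    also have "\<dots> \<longleftrightarrow> Ncnt n x + 1 + 2 * int (card M) - 2 * qheight n g = Ncnt n x - 2 * qheight n g + 1"
      unfolding pl_s pl_ss sc ..
    also have "\<dots> \<longleftrightarrow> card M = 0" by linarith
    also have "\<dots> \<longleftrightarrow> M = {}" using fM by simp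
    also have "\<dots> \<longleftrightarrow> (\<forall>k. i < k \<and> k < j \<longrightarrow> x i - x k < 0 \<or> x k - x j < 0)"
    proof -
      have "\<And>k. i < k \<Longrightarrow> k < j \<Longrightarrow> x k \<noteq> x i \<and> x k \<noteq> x j" using xne ij by auto
      then show ?thesis unfolding M_def by fastforce
    qed
    finally show ?thesis unfolding lam_def[symmetric] D1 D2 ipa using True by auto
  next
    case False
    then have lt: "x i < x j" using xne[of i j] ij by auto
    have m: "mval n r a lam = xij + int r"
      using mval_eq[of "xij + int r" r n lam a "gij - 1"] xij gij iplam lt xb[of i j] ij
      by (simp add: algebra_simps)
    obtain cg :: "nat \<Rightarrow> int" where cg: "g = (\<lambda>j. \<Sum>i<n-1. of_int (cg i) * alpha i j)"
      using g unfolding Ql_def by blast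
    define cg' where "cg' k = cg k - of_bool (i \<le> k \<and> k < j)" for k
    define g' where "g' = (\<lambda>t. \<Sum>k<n-1. of_int (cg' k) * alpha k t)"
    have g'Q: "g' \<in> Ql n" unfolding g'_def Ql_def by blast
    have g'e: "g' = (\<lambda>t. g t - a t)"
      unfolding g'_def a root_as_alpha[OF ij] cg
      by (simp add: fun_eq_iff cg'_def left_diff_distrib sum_subtractf)
    have cnt: "(\<Sum>k<n-1. (of_bool (i \<le> k \<and> k < j) :: int)) = int (j - i)"
    proof -
      have e: "{..<n-1} \<inter> {k. i \<le> k \<and> k < j} = {i..<j}" using ij by auto
      show ?thesis by (subst sum_of_bool_eq) (simp_all only: finite_lessThan e card_atLeastLessThan)
    qed
    have qh: "qheight n g' = qheight n g - int (j - i)"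
      unfolding g'_def cg qheight_eq cg'_def using cnt by (simp add: sum_subtractf del: sum_of_bool_eq)
    have rf: "refl_alpha n r a lam = (\<lambda>t. act (\<sigma> \<circ> s) L t + real r * g' t)"
    proof -
      have "refl_alpha n r a lam = (\<lambda>t. lam t - (of_int xij + real r) * a t)" using m by (simp add: refl_alpha_def)
      also have "\<dots> = (\<lambda>t. act (\<sigma> \<circ> s) L t + real r * g' t)"
        unfolding acts lam_def actx g'e a unfolding \<sigma>_def
        using xij ij by (auto simp: fun_eq_iff eps_def transpose_def algebra_simps)
      finally show ?thesis .
    qed
    have dr: "deg n r L (refl_alpha n r a lam) = int (perm_length n (\<sigma> \<circ> s)) - 2 * qheight n g'"
      unfolding rf by (rule deg_eq[OF n pos th hL r0 ss g'Q])
    define y where "y = x \<circ> \<sigma>"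
    have yinj: "inj_on y {..<n}" unfolding y_def
      using xinj sig by (metis comp_inj_on permutes_image permutes_inj_on)
    have yij: "y j < y i" using lt by (simp add: y_def \<sigma>_def)
    have yx: "y \<circ> \<sigma> = x" by (simp add: y_def \<sigma>_def fun_eq_iff)
    define M where "M = {k. i < k \<and> k < j \<and> x i < x k \<and> x k < x j}"
    have My: "{k. i < k \<and> k < j \<and> y j < y k \<and> y k < y i} = M"
      unfolding M_def y_def \<sigma>_def by auto
    have sc0: "Ncnt n (y \<circ> \<sigma>) = Ncnt n y + 1 + 2 * int (card M)"
      using swap_count[OF yinj ij yij] unfolding My \<sigma>_def .
    have sc: "Ncnt n x = Ncnt n y + 1 + 2 * int (card M)"
      using sc0 unfolding yx .
    have Msub: "M \<subseteq> {i<..<j}" unfolding M_def by auto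
    have "admissible n r L lam a \<longleftrightarrow> card M = j - i - 1"
    proof -
      have "admissible n r L lam a \<longleftrightarrow> int (perm_length n (\<sigma> \<circ> s)) - 2 * (qheight n g - int (j - i)) = int (perm_length n s) - 2 * qheight n g + 1"
        using adm dr deg_lam qh by simp
      also have "\<dots> \<longleftrightarrow> Ncnt n y - 2 * (qheight n g - int (j - i)) = Ncnt n y + 1 + 2 * int (card M) - 2 * qheight n g + 1"
        unfolding pl_s pl_ss sc y_def ..
      also have "\<dots> \<longleftrightarrow> int (card M) = int (j - i) - 1" by (smt (verit))
      also have "\<dots> \<longleftrightarrow> card M = j - i - 1"
      proof -
        have e: "int (j - i) - 1 = int (j - i - 1)" using ij by simp
        show ?thesis by (simp only: e of_nat_eq_iff)
      qed
      finally show ?thesis .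
    qed
    also have "\<dots> \<longleftrightarrow> M = {i<..<j}"
    proof
      assume "card M = j - i - 1"
      then have "card M = card {i<..<j}" by simp
      then show "M = {i<..<j}" using card_subset_eq[OF finite_greaterThanLessThan Msub] by simp
    next
      assume "M = {i<..<j}" then show "card M = j - i - 1" by simp
    qed
    also have "\<dots> \<longleftrightarrow> (\<forall>k. i < k \<and> k < j \<longrightarrow> x i - x k < 0 \<and> x k - x j < 0)"
    proof
      assume H: "M = {i<..<j}"
      show "\<forall>k. i < k \<and> k < j \<longrightarrow> x i - x k < 0 \<and> x k - x j < 0"
      proof (intro allI impI)
        fix k assume "i < k \<and> k < j"
        then have "k \<in> M" using H by simp
        then show "x i - x k < 0 \<and> x k - x j < 0" unfolding M_def by simp
      qed
    next
      assume H: "\<forall>k. i < k \<and> k < j \<longrightarrow> x i - x k < 0 \<and> x k - x j < 0"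
      show "M = {i<..<j}"
      proof (rule set_eqI)
        fix k show "k \<in> M \<longleftrightarrow> k \<in> {i<..<j}" using H[rule_format, of k] unfolding M_def by auto
      qed
    qed
    finally show ?thesis unfolding lam_def[symmetric] D1 D2 ipa using lt by auto
  qed
qed

end
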